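(* Consider the P-SSD algorithm described in the context, executed over a constant (time-invariant) digraph $G$. Let $P$ be a directed path of length $l$ in $G$ from node $j$ to node $i$. Then for each iteration $k\in\mathbb{N}$ and all $q\ge k+l$, $$\mathcal{R}(C_q^i)\subseteq\mathcal{R}(C_k^j)\qquad\text{and}\qquad \mathcal{R}(D(X_j)C_q^i)=\mathcal{R}(D(Y_j)C_q^i).$$
   Context: Data setting: a map $T:\mathcal{M}\to\mathcal{M}$, $\mathcal{M}\subseteq\mathbb{R}^n$; a dictionary $D(x)=[d_1(x),\dots,d_{N_d}(x)]$ of real-valued functions on $\mathcal{M}$; data matrices $X,Y\in\mathbb{R}^{N\times n}$ whose $i$-th rows $x_i^T,y_i^T$ satisfy $y_i=T(x_i)$; $D(X)\in\mathbb{R}^{N\times N_d}$ is the matrix with rows $D(x_1),\dots,D(x_N)$ (similarly $D(Y)$). Assumption: $D(X)$ and $D(Y)$ have full column rank. There are $M$ agents; agent $i$ holds local dictionary snapshots $D(X_i),D(Y_i)$ (obtained from a subset of the snapshot pairs) such that the union over $i$ of the rows of $[D(X_i),D(Y_i)]$ equals the set of rows of $[D(X),D(Y)]$. There are signature matrices $D(X_s),D(Y_s)$ with full column rank such that the rows of $[D(X_s),D(Y_s)]$ are contained in the rows of $[D(X_i),D(Y_i)]$ for every $i$. SSD algorithm: given $A,B\in\mathbb{R}^{m\times q}$, set $A_1=A$, $B_1=B$, $C=I_q$, and iterate: let $[Z^A_j;Z^B_j]$ be a matrix whose columns form a basis of the null space of $[A_j,B_j]$ (with $Z^A_j$ having as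 many rows as $A_j$ has columns); if the null space is trivial return $0$; if the number of rows of $Z^A_j$ is at most its number of columns, return $C$; otherwise set $C\leftarrow CZ^A_j$, $A_{j+1}=A_jZ^A_j$, $B_{j+1}=B_jZ^A_j$. Its output is denoted $\mathrm{SSD}(A,B)$. P-SSD algorithm: at iteration $k\ge1$ the digraph $G_k$ is used; an edge $(j,i)\in E_k$ means $j$ is an in-neighbor of $i$, and $\mathcal{N}_{\mathrm{in}}^k(i)$ denotes the in-neighbors of $i$ in $G_k$. Each agent $i$ sets $C_0^i=I_{N_d}$, $\mathrm{flag}_0^i=0$, and for $k=1,2,\dots$: receives $C_{k-1}^j$ for $j\in\mathcal{N}_{\mathrm{in}}^k(i)$; sets $D_k^i=\mathrm{basis}\big(\bigcap_{j\in\{i\}\cup\mathcal{N}_{\mathrm{in}}^k(i)}\mathcal{R}(C_{k-1}^j)\big)$; sets $E_k^i=\mathrm{SSD}(D(X_i)D_k^i,D(Y_i)D_k^i)$; if the number of columns of $D_k^iE_k^i$ is strictly less than that of $C_{k-1}^i$, sets $C_k^i=D_k^iE_k^i$ and $\mathrm{flag}_k^i=0$; otherwise sets $C_k^i=C_{k-1}^i$ and $\mathrm{flag}_k^i=1$; then transmits $C_k^i$ to its out-neighbors. Here $\mathrm{basis}(\mathcal{A})$ returns a matrix whose columns form a basis of the subspace $\mathcal{A}$, and returns $0$ if $\mathcal{A}=\{0\}$; the matrix $0$ is regarded as having $0$ columns. $\mathcal{R}(\cdot)$ denotes range space. A directed path of length $l$ from $j$ to $i$ is a sequence of $l+1$ nodes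 starting at $j$ and ending at $i$ in which each consecutive ordered pair is an edge. *)

theory Defs
  imports "Jordan_Normal_Form.DL_Rank" "Jordan_Normal_Form.Matrix_Kernel"
begin

definition rng :: "real mat \<Rightarrow> real vec set" where
  "rng A = vec_space.col_space (dim_row A) A"

definition full_col_rank :: "real mat \<Rightarrow> bool" where
  "full_col_rank A \<longleftrightarrow> vec_space.rank (dim_row A) A = dim_col A"

text \<open>If S = {0} this forces B to have 0 columns, i.e. B is the matrix 0 of the paper.\<close>
definition is_basis_of :: "real mat \<Rightarrow> nat \<Rightarrow> real vec set \<Rightarrow> bool" where
  "is_basis_of B n S \<longleftrightarrow> dim_row B = n \<and> full_col_rank B \<and> rng B = S"

definition hcat :: "real mat \<Rightarrow> real mat \<Rightarrow> real mat" where
  "hcat A B = mat (dim_row A) (dim_col A + dim_col B)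
     (\<lambda>(r, c). if c < dim_col A then A $$ (r, c) else B $$ (r, c - dim_col A))"

definition top_rows :: "real mat \<Rightarrow> nat \<Rightarrow> real mat" where
  "top_rows Z p = mat p (dim_col Z) (\<lambda>(r, c). Z $$ (r, c))"

text \<open>ssd_rel A B C out: starting from the current state (A_j, B_j, C), some run of
  the SSD iteration returns out.\<close>
inductive ssd_rel :: "real mat \<Rightarrow> real mat \<Rightarrow> real mat \<Rightarrow> real mat \<Rightarrow> bool" where
  trivial_null:
    "mat_kernel (hcat A B) = {0\<^sub>v (dim_col A + dim_col B)}
     \<Longrightarrow> ssd_rel A B C (0\<^sub>m (dim_row C) 0)"
| stop:
    "is_basis_of Z (dim_col A + dim_col B) (mat_kernel (hcat A B))
     \<Longrightarrow> mat_kernel (hcat A B) \<noteq> {0\<^sub>v (dim_col A + dim_col B)}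
     \<Longrightarrow> dim_col A \<le> dim_col Z
     \<Longrightarrow> ssd_rel A B C C"
| step:
    "is_basis_of Z (dim_col A + dim_col B) (mat_kernel (hcat A B))
     \<Longrightarrow> mat_kernel (hcat A B) \<noteq> {0\<^sub>v (dim_col A + dim_col B)}
     \<Longrightarrow> \<not> dim_col A \<le> dim_col Z
     \<Longrightarrow> ssd_rel (A * top_rows Z (dim_col A)) (B * top_rows Z (dim_col A))
                 (C * top_rows Z (dim_col A)) out
     \<Longrightarrow> ssd_rel A B C out"

definition ssd :: "real mat \<Rightarrow> real mat \<Rightarrow> real mat \<Rightarrow> bool" where
  "ssd A B out \<longleftrightarrow> ssd_rel A B (1\<^sub>m (dim_col A)) out"

definition dict_mat :: "(nat \<Rightarrow> real vec \<Rightarrow> real) \<Rightarrow> nat \<Rightarrow> (nat \<Rightarrow> real vec) \<Rightarrow> nat \<Rightarrow> real mat" where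
  "dict_mat d Nd zs m = mat m Nd (\<lambda>(r, k). d k (zs r))"

definition local_mat :: "(nat \<Rightarrow> real vec \<Rightarrow> real) \<Rightarrow> nat \<Rightarrow> (nat \<Rightarrow> real vec) \<Rightarrow> nat list \<Rightarrow> real mat" where
  "local_mat d Nd zs idx = dict_mat d Nd (\<lambda>r. zs (idx ! r)) (length idx)"

definition row_pairs :: "real mat \<Rightarrow> real mat \<Rightarrow> (real vec \<times> real vec) set" where
  "row_pairs A B = {(row A r, row B r) | r. r < dim_row A}"

definition in_nbrs :: "(nat \<times> nat) set \<Rightarrow> nat \<Rightarrow> nat set" where
  "in_nbrs E i = {j. (j, i) \<in> E}"

definition dir_path :: "nat set \<Rightarrow> (nat \<times> nat) set \<Rightarrow> nat list \<Rightarrow> nat \<Rightarrow> nat \<Rightarrow> nat \<Rightarrow> bool" where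
  "dir_path V E ps l j i \<longleftrightarrow> length ps = l + 1 \<and> set ps \<subseteq> V \<and> hd ps = j \<and> last ps = i \<and>
     (\<forall>t < l. (ps ! t, ps ! (t + 1)) \<in> E)"

text \<open>C k i = C_k^i, Dm k i = D_k^i, Em k i = E_k^i.
  (The flags do not influence C and are omitted.)\<close>
definition pssd_exec ::
  "nat \<Rightarrow> (nat \<times> nat) set \<Rightarrow> nat \<Rightarrow> (nat \<Rightarrow> real mat) \<Rightarrow> (nat \<Rightarrow> real mat)
   \<Rightarrow> (nat \<Rightarrow> nat \<Rightarrow> real mat) \<Rightarrow> (nat \<Rightarrow> nat \<Rightarrow> real mat) \<Rightarrow> (nat \<Rightarrow> nat \<Rightarrow> real mat) \<Rightarrow> bool" where
  "pssd_exec Mag E Nd DXl DYl C Dm Em \<longleftrightarrow>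
     (\<forall>i < Mag. C 0 i = 1\<^sub>m Nd) \<and>
     (\<forall>k \<ge> 1. \<forall>i < Mag.
        is_basis_of (Dm k i) Nd (\<Inter>j \<in> insert i (in_nbrs E i). rng (C (k - 1) j)) \<and>
        ssd (DXl i * Dm k i) (DYl i * Dm k i) (Em k i) \<and>
        C k i = (if dim_col (Dm k i * Em k i) < dim_col (C (k - 1) i)
                 then Dm k i * Em k i else C (k - 1) i))"

end

theory Submission
  imports Defs
begin

definition injm :: "real mat \<Rightarrow> bool" where
  "injm A \<longleftrightarrow> (\<forall>x\<in>carrier_vec (dim_col A). A *\<^sub>v x = 0\<^sub>v (dim_row A) \<longrightarrow> x = 0\<^sub>v (dim_col A))"


lemma injm_eq: assumes "injm A" "u \<in> carrier_vec (dim_col A)" "w \<in> carrier_vec (dim_col A)"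
  "A *\<^sub>v u = A *\<^sub>v w" shows "u = w"
proof -
  have A: "A \<in> carrier_mat (dim_row A) (dim_col A)" by auto
  have "A *\<^sub>v (u - w) = A *\<^sub>v u - A *\<^sub>v w" using mult_minus_distrib_mat_vec[OF A assms(2,3)] .
  also have "\<dots> = A *\<^sub>v w - A *\<^sub>v w" using assms(4) by simp
  also have "\<dots> = 0\<^sub>v (dim_row A)" by (intro eq_vecI) simp_all
  finally have d: "u - w = 0\<^sub>v (dim_col A)"
    using assms(1) assms(2,3) unfolding injm_def by (metis minus_carrier_vec)
  show ?thesis
  proof (rule eq_vecI)
    fix i assume i: "i < dim_vec w"
    then have "(u - w) $ i = 0" using d assms(3) by simp
    then show "u $ i = w $ i" using i assms(2,3) by simp
  qed (use assms(2,3) in simp)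
qed

lemma fcr_injm: assumes "full_col_rank A" shows "injm A"
proof (rule ccontr)
  let ?n = "dim_row A" let ?nc = "dim_col A"
  interpret vec_space "TYPE(real)" ?n .
  have A: "A \<in> carrier_mat ?n ?nc" by auto
  assume "\<not> injm A"
  then obtain v where v: "v \<in> carrier_vec ?nc" "v \<noteq> 0\<^sub>v ?nc" "A *\<^sub>v v = 0\<^sub>v ?n"
    unfolding injm_def by auto
  have rk: "rank A = ?nc" using assms unfolding full_col_rank_def by simp
  show False
  proof (cases "distinct (cols A)")
    case True
    then have "lin_dep (set (cols A))" using lin_depI[OF A v] by auto
    moreover have "lin_indpt (set (cols A))" using full_rank_lin_indpt[OF A rk True] .
    ultimately show False by auto
  next
    case False
    obtain S where S: "maximal S (\<lambda>T. T \<subseteq> set (cols A) \<and> lin_indpt T)"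
      using maximal_exists[of "(\<lambda>T. T \<subseteq> set (cols A) \<and> lin_indpt T)" "card (set (cols A))" "{}"]
      by (meson List.finite_set card_mono empty_iff empty_subsetI finite_lin_indpt2 rev_finite_subset)
    then have "card S \<le> card (set (cols A))" by (simp add: card_mono maximal_def)
    moreover have "card (set (cols A)) < ?nc"
      using False card_distinct[of "cols A"] card_length[of "cols A"] cols_length[of A]
      by (metis le_neq_implies_less)
    ultimately have "card S < ?nc" by auto
    then show False using rank_card_indpt[OF A S] rk by simp
  qed
qed

lemma rng_iff: "y \<in> rng A \<longleftrightarrow> (\<exists>x\<in>carrier_vec (dim_col A). y = A *\<^sub>v x)"
proof -
  have A: "A \<in> carrier_mat (dim_row A) (dim_col A)" by auto
  have e: "rng A = {y\<in>carrier_vec (dim_row A). \<exists>x\<in>carrier_vec (dim_col A). A *\<^sub>v x = y}"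
    using vec_space.col_space_eq[OF A] unfolding rng_def .
  have "\<And>x. A *\<^sub>v x \<in> carrier_vec (dim_row A)" by (metis A mult_mat_vec_carrier carrier_vec_dim_vec dim_mult_mat_vec)
  then show ?thesis unfolding e by blast
qed

lemma rng_mult_sub: assumes D: "D \<in> carrier_mat n p" and E: "E \<in> carrier_mat p c"
  shows "rng (D * E) \<subseteq> rng D"
proof
  fix y assume "y \<in> rng (D * E)"
  then obtain x where x: "x \<in> carrier_vec c" "y = (D * E) *\<^sub>v x" using E by (auto simp: rng_iff)
  then have "y = D *\<^sub>v (E *\<^sub>v x)" using D E by simp
  moreover have "E *\<^sub>v x \<in> carrier_vec (dim_col D)" using D E x(1) by simp
  ultimately show "y \<in> rng D" by (auto simp: rng_iff)
qed

lemma rng_cong_mult: assumes M: "M \<in> carrier_mat r n" and V: "V \<in> carrier_mat n a"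
  and W: "W \<in> carrier_mat n b" and sub: "rng V \<subseteq> rng W"
  shows "rng (M * V) \<subseteq> rng (M * W)"
proof
  fix y assume "y \<in> rng (M * V)"
  then obtain x where x: "x \<in> carrier_vec a" "y = (M * V) *\<^sub>v x" using V by (auto simp: rng_iff)
  then have y: "y = M *\<^sub>v (V *\<^sub>v x)" using M V by simp
  have "V *\<^sub>v x \<in> rng V" using x V by (auto simp: rng_iff)
  then have "V *\<^sub>v x \<in> rng W" using sub by blast
  then obtain w where w: "w \<in> carrier_vec b" "V *\<^sub>v x = W *\<^sub>v w" using W unfolding rng_iff by auto
  have "y = (M * W) *\<^sub>v w" using y w M W by simp
  then show "y \<in> rng (M * W)" using w M W by (auto simp: rng_iff)
qed

lemma injm_mult: assumes A: "A \<in> carrier_mat r n" and B: "B \<in> carrier_mat n c"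
  and "injm A" "injm B" shows "injm (A * B)"
  unfolding injm_def
proof (intro ballI impI)
  fix x assume x: "x \<in> carrier_vec (dim_col (A * B))" and z: "(A * B) *\<^sub>v x = 0\<^sub>v (dim_row (A * B))"
  have x': "x \<in> carrier_vec c" using x B by simp
  have "A *\<^sub>v (B *\<^sub>v x) = 0\<^sub>v (dim_row A)" using z A B x' by simp
  then have "B *\<^sub>v x = 0\<^sub>v (dim_col A)" using assms(3) A B x' unfolding injm_def by simp
  then have "B *\<^sub>v x = 0\<^sub>v (dim_row B)" using A B by simp
  then show "x = 0\<^sub>v (dim_col (A * B))" using assms(4) B x' unfolding injm_def by simp
qed

lemma injm_one: "injm (1\<^sub>m n)" unfolding injm_def by simp

lemma injm_0cols: "dim_col A = 0 \<Longrightarrow> injm A" unfolding injm_def by auto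

lemma mult_zero_vec: assumes A: "A \<in> carrier_mat r c" shows "A *\<^sub>v 0\<^sub>v c = 0\<^sub>v r"
  using A by (intro eq_vecI) (auto simp: scalar_prod_def)

lemma rng_0cols: assumes M: "M \<in> carrier_mat r 0" shows "rng M = {0\<^sub>v r}"
proof -
  have z: "M *\<^sub>v x = 0\<^sub>v r" if "x \<in> carrier_vec 0" for x
    using that M by (intro eq_vecI) (auto simp: scalar_prod_def)
  have c: "dim_col M = 0" using M by simp
  show ?thesis
  proof
    show "rng M \<subseteq> {0\<^sub>v r}"
    proof
      fix y assume "y \<in> rng M"
      then obtain x where "x \<in> carrier_vec 0" "y = M *\<^sub>v x" unfolding rng_iff c by blast
      then show "y \<in> {0\<^sub>v r}" using z by simp
    qed
    have "(0\<^sub>v 0 :: real vec) \<in> carrier_vec 0" by simp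
    then have "M *\<^sub>v 0\<^sub>v 0 \<in> rng M" unfolding rng_iff c by blast
    then show "{0\<^sub>v r} \<subseteq> rng M" using z by simp
  qed
qed

lemma square_surj: assumes A: "A \<in> carrier_mat n n" and inj: "injm A" and y: "y \<in> carrier_vec n"
  shows "\<exists>x\<in>carrier_vec n. A *\<^sub>v x = y"
proof -
  have "det A \<noteq> 0"
  proof
    assume "det A = 0"
    then obtain v where "v \<in> carrier_vec n" "v \<noteq> 0\<^sub>v n" "A *\<^sub>v v = 0\<^sub>v n"
      using det_0_iff_vec_prod_zero[OF A] by auto
    then show False using inj A unfolding injm_def by auto
  qed
  from det_non_zero_imp_unit[OF A this]
  have "A \<in> Units (ring_mat TYPE(real) n ())" .
  then obtain B where B: "B \<in> carrier_mat n n" "A * B = 1\<^sub>m n"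
    unfolding Units_def ring_mat_def by auto
  have "A *\<^sub>v (B *\<^sub>v y) = y" using A B y by (metis assoc_mult_mat_vec one_mult_mat_vec)
  moreover have "B *\<^sub>v y \<in> carrier_vec n" using B y by simp
  ultimately show ?thesis by blast
qed

lemma inj_le: assumes A: "A \<in> carrier_mat q p" and inj: "injm A" shows "p \<le> q"
proof (rule ccontr)
  assume "\<not> p \<le> q"
  then have qp: "q < p" by simp
  define A' where "A' = mat p p (\<lambda>(r, c). if r < q then A $$ (r, c) else 0)"
  have A': "A' \<in> carrier_mat p p" unfolding A'_def by simp
  have comp: "(A' *\<^sub>v v) $ r = (if r < q then (A *\<^sub>v v) $ r else 0)" if "r < p" "v \<in> carrier_vec p" for r v
    using that A by (auto simp: A'_def scalar_prod_def)
  have "injm A'" unfolding injm_def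
  proof (intro ballI impI)
    fix v assume v: "v \<in> carrier_vec (dim_col A')" and z: "A' *\<^sub>v v = 0\<^sub>v (dim_row A')"
    have v': "v \<in> carrier_vec p" using v A' by simp
    have "A *\<^sub>v v = 0\<^sub>v q"
    proof (rule eq_vecI)
      fix r assume "r < dim_vec (0\<^sub>v q :: real vec)"
      then have r: "r < q" by simp
      have "(A' *\<^sub>v v) $ r = 0" using z r qp A' by simp
      then show "(A *\<^sub>v v) $ r = 0\<^sub>v q $ r" using comp[OF _ v'] r qp by simp
    qed (use A in simp)
    then show "v = 0\<^sub>v (dim_col A')" using inj A v' A' unfolding injm_def by simp
  qed
  from square_surj[OF A' this unit_vec_carrier[of p q]]
  obtain x where x: "x \<in> carrier_vec p" "A' *\<^sub>v x = unit_vec p q" by auto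
  have "(A' *\<^sub>v x) $ q = 0" using comp[OF qp x(1)] by simp
  moreover have "unit_vec p q $ q = (1::real)" using qp by simp
  ultimately show False using x(2) by simp
qed

lemma sub_rng_eq: assumes V: "V \<in> carrier_mat n p" and C: "C \<in> carrier_mat n q"
  and inj: "injm V" and qp: "q \<le> p" and sub: "rng V \<subseteq> rng C"
  shows "rng C \<subseteq> rng V"
proof -
  have ex: "\<exists>w. w \<in> carrier_vec q \<and> C *\<^sub>v w = col V c" if "c < p" for c
  proof -
    have "col V c = V *\<^sub>v unit_vec p c" using V that
      by (intro eq_vecI) auto
    then have "col V c \<in> rng V" using V that by (auto simp: rng_iff)
    then have "col V c \<in> rng C" using sub by blast
    then show ?thesis using C unfolding rng_iff by auto
  qed
  define w where "w c = (SOME w. w \<in> carrier_vec q \<and> C *\<^sub>v w = col V c)" for c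
  have w: "w c \<in> carrier_vec q" "C *\<^sub>v w c = col V c" if "c < p" for c
  proof -
    have "w c \<in> carrier_vec q \<and> C *\<^sub>v w c = col V c" unfolding w_def by (rule someI_ex[OF ex[OF that]])
    then show "w c \<in> carrier_vec q" "C *\<^sub>v w c = col V c" by blast+
  qed
  define W where "W = mat q p (\<lambda>(r, c). w c $ r)"
  have W: "W \<in> carrier_mat q p" unfolding W_def by simp
  have CW: "C * W = V"
  proof (rule eq_matI)
    fix r c assume r: "r < dim_row V" and c: "c < dim_col V"
    have colW: "col W c = w c" using w(1)[of c] c V unfolding W_def by (intro eq_vecI) auto
    have "(C * W) $$ (r, c) = row C r \<bullet> col W c" using r c C V W by simp
    also have "\<dots> = (C *\<^sub>v w c) $ r" using r C V colW by simp
    also have "\<dots> = V $$ (r, c)" using w(2)[of c] c r V by simp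
    finally show "(C * W) $$ (r, c) = V $$ (r, c)" .
  qed (use C V W in auto)
  have injW: "injm W" unfolding injm_def
  proof (intro ballI impI)
    fix x assume x: "x \<in> carrier_vec (dim_col W)" and z: "W *\<^sub>v x = 0\<^sub>v (dim_row W)"
    have x': "x \<in> carrier_vec p" using x W by simp
    have e: "(C * W) *\<^sub>v x = C *\<^sub>v (W *\<^sub>v x)" by (rule assoc_mult_mat_vec[OF C W x'])
    have "V *\<^sub>v x = C *\<^sub>v (W *\<^sub>v x)" using CW e by simp
    also have "\<dots> = C *\<^sub>v 0\<^sub>v q" using z W by simp
    also have "\<dots> = 0\<^sub>v n" by (rule mult_zero_vec[OF C])
    finally have "V *\<^sub>v x = 0\<^sub>v (dim_row V)" using V by simp
    then have "x = 0\<^sub>v (dim_col V)" using inj x' V unfolding injm_def by blast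
    then show "x = 0\<^sub>v (dim_col W)" using V W by simp
  qed
  have "p \<le> q" using inj_le[OF W injW] .
  then have pq: "p = q" using qp by simp
  show ?thesis
  proof
    fix y assume "y \<in> rng C"
    then obtain x where x: "x \<in> carrier_vec q" "y = C *\<^sub>v x" using C unfolding rng_iff by auto
    have Wq: "W \<in> carrier_mat q q" using W pq by simp
    obtain z where z: "z \<in> carrier_vec p" "W *\<^sub>v z = x" using square_surj[OF Wq injW x(1)] pq by auto
    have e: "(C * W) *\<^sub>v z = C *\<^sub>v (W *\<^sub>v z)" by (rule assoc_mult_mat_vec[OF C W z(1)])
    have "y = V *\<^sub>v z" using x z CW e by simp
    then show "y \<in> rng V" using z V unfolding rng_iff by auto
  qed
qed

lemma rows_sub_zero: fixes S X :: "real mat" assumes S: "S \<in> carrier_mat rs n" and X: "X \<in> carrier_mat rx n"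
  and rows: "\<forall>r<rs. \<exists>r'<rx. row S r = row X r'"
  and u: "u \<in> carrier_vec n" and z: "X *\<^sub>v u = 0\<^sub>v rx"
  shows "S *\<^sub>v u = 0\<^sub>v rs"
proof (rule eq_vecI)
  fix r assume "r < dim_vec (0\<^sub>v rs :: real vec)"
  then have r: "r < rs" by simp
  then obtain r' where r': "r' < rx" "row S r = row X r'" using rows by blast
  have "(S *\<^sub>v u) $ r = row S r \<bullet> u" using r S by simp
  also have "\<dots> = (X *\<^sub>v u) $ r'" using r' X by simp
  also have "\<dots> = 0" using z r' by simp
  finally show "(S *\<^sub>v u) $ r = 0\<^sub>v rs $ r" using r by simp
qed (use S in simp)

lemma rows_sub_eq: fixes S T X Y :: "real mat" assumes S: "S \<in> carrier_mat rs n" and T: "T \<in> carrier_mat rs n'"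
  and X: "X \<in> carrier_mat rx n" and Y: "Y \<in> carrier_mat rx n'"
  and rows: "\<forall>r<rs. \<exists>r'<rx. row S r = row X r' \<and> row T r = row Y r'"
  and e: "X *\<^sub>v u = Y *\<^sub>v w"
  shows "S *\<^sub>v u = T *\<^sub>v w"
proof (rule eq_vecI)
  fix r assume "r < dim_vec (T *\<^sub>v w)"
  then have r: "r < rs" using T by simp
  then obtain r' where r': "r' < rx" "row S r = row X r'" "row T r = row Y r'" using rows by blast
  have "(S *\<^sub>v u) $ r = row S r \<bullet> u" using r S by simp
  also have "\<dots> = (X *\<^sub>v u) $ r'" using r' X by simp
  also have "\<dots> = (Y *\<^sub>v w) $ r'" using e by simp
  also have "\<dots> = row T r \<bullet> w" using r' Y by simp
  also have "\<dots> = (T *\<^sub>v w) $ r" using r T by simp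
  finally show "(S *\<^sub>v u) $ r = (T *\<^sub>v w) $ r" .
qed (use S T in simp)

lemma row_pairs_sub: assumes "row_pairs S T \<subseteq> row_pairs X Y"
  shows "\<forall>r<dim_row S. \<exists>r'<dim_row X. row S r = row X r' \<and> row T r = row Y r'"
  using assms unfolding row_pairs_def by blast

lemma hcat_carrier: assumes "A \<in> carrier_mat r c" "B \<in> carrier_mat r c2"
  shows "hcat A B \<in> carrier_mat r (c + c2)"
  using assms unfolding hcat_def by simp

lemma hcat_mult: assumes A: "A \<in> carrier_mat r c" and B: "B \<in> carrier_mat r c2"
  and v: "v \<in> carrier_vec (c + c2)"
  shows "hcat A B *\<^sub>v v = A *\<^sub>v vec c (\<lambda>i. v $ i) + B *\<^sub>v vec c2 (\<lambda>i. v $ (c + i))"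
proof (rule eq_vecI)
  fix i assume "i < dim_vec (A *\<^sub>v vec c (\<lambda>i. v $ i) + B *\<^sub>v vec c2 (\<lambda>i. v $ (c + i)))"
  then have i: "i < r" using A B by simp
  let ?f = "\<lambda>k. (if k < c then A $$ (i, k) else B $$ (i, k - c)) * v $ k"
  have H: "hcat A B \<in> carrier_mat r (c + c2)" using hcat_carrier[OF A B] .
  have dA: "dim_col A = c" "dim_row A = r" "dim_col B = c2" using A B by auto
  have "(hcat A B *\<^sub>v v) $ i = (\<Sum>k\<in>{0..<c + c2}. hcat A B $$ (i, k) * v $ k)"
    using i H v by (simp add: scalar_prod_def)
  also have "\<dots> = (\<Sum>k\<in>{0..<c + c2}. ?f k)"
    by (rule sum.cong) (use i dA in \<open>auto simp: hcat_def\<close>)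
  also have "\<dots> = (\<Sum>k\<in>{0..<c}. ?f k) + (\<Sum>k\<in>{c..<c + c2}. ?f k)"
    by (rule sum.atLeastLessThan_concat[symmetric]) auto
  also have "(\<Sum>k\<in>{0..<c}. ?f k) = (\<Sum>k\<in>{0..<c}. A $$ (i, k) * v $ k)" by simp
  also have "(\<Sum>k\<in>{c..<c + c2}. ?f k) = (\<Sum>k\<in>{0..<c2}. ?f (k + c))"
    using sum.shift_bounds_nat_ivl[of ?f 0 c c2] by (simp add: add.commute)
  also have "\<dots> = (\<Sum>k\<in>{0..<c2}. B $$ (i, k) * v $ (c + k))" by (simp add: add.commute)
  also have "(\<Sum>k\<in>{0..<c}. A $$ (i, k) * v $ k) = (A *\<^sub>v vec c (\<lambda>i. v $ i)) $ i"
    using i A by (simp add: scalar_prod_def)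
  also have "(\<Sum>k\<in>{0..<c2}. B $$ (i, k) * v $ (c + k)) = (B *\<^sub>v vec c2 (\<lambda>i. v $ (c + i))) $ i"
    using i B by (simp add: scalar_prod_def)
  finally show "(hcat A B *\<^sub>v v) $ i = (A *\<^sub>v vec c (\<lambda>i. v $ i) + B *\<^sub>v vec c2 (\<lambda>i. v $ (c + i))) $ i"
    using i A B by simp
qed (use A B in \<open>simp add: hcat_def\<close>)

definition bot_rows :: "real mat \<Rightarrow> nat \<Rightarrow> nat \<Rightarrow> real mat" where
  "bot_rows Z p q = mat q (dim_col Z) (\<lambda>(r, c). Z $$ (p + r, c))"

lemma top_rows_mult: assumes Z: "Z \<in> carrier_mat (p + q) z" and x: "x \<in> carrier_vec z"
  shows "top_rows Z p *\<^sub>v x = vec p (\<lambda>i. (Z *\<^sub>v x) $ i)"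
  using Z x by (intro eq_vecI) (auto simp: top_rows_def scalar_prod_def)

lemma bot_rows_mult: assumes Z: "Z \<in> carrier_mat (p + q) z" and x: "x \<in> carrier_vec z"
  shows "bot_rows Z p q *\<^sub>v x = vec q (\<lambda>i. (Z *\<^sub>v x) $ (p + i))"
  using Z x by (intro eq_vecI) (auto simp: bot_rows_def scalar_prod_def)

lemma injmD: "injm A \<Longrightarrow> A \<in> carrier_mat r c \<Longrightarrow> x \<in> carrier_vec c \<Longrightarrow> A *\<^sub>v x = 0\<^sub>v r \<Longrightarrow> x = 0\<^sub>v c"
  unfolding injm_def by auto

lemma vec_neg_eq: fixes a b :: "real vec"
  assumes a: "a \<in> carrier_vec r" and b: "b \<in> carrier_vec r" and e: "a + b = 0\<^sub>v r"
  shows "a = - b" "b = - a"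
proof -
  have c: "a $ i + b $ i = 0" if "i < r" for i
  proof -
    have "(a + b) $ i = 0" using e that by simp
    then show ?thesis using that b by simp
  qed
  show "a = - b" by (rule eq_vecI) (use a b c in \<open>auto simp: add_eq_0_iff\<close>)
  show "b = - a" by (rule eq_vecI) (use a b c in \<open>auto simp: add_eq_0_iff2\<close>)
qed

lemma mult_neg: fixes B :: "real mat" assumes B: "B \<in> carrier_mat r c" and w: "w \<in> carrier_vec c"
  shows "- (B *\<^sub>v w) = B *\<^sub>v (- w)"
  by (rule eq_vecI) (use B w in auto)

lemma kernel_facts:
  fixes A B Z :: "real mat"
  assumes A: "A \<in> carrier_mat r c" and B: "B \<in> carrier_mat r c2" and iA: "injm A" and iB: "injm B"
  and Zb: "is_basis_of Z (c + c2) (mat_kernel (hcat A B))"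
  shows "top_rows Z c \<in> carrier_mat c (dim_col Z)" "bot_rows Z c c2 \<in> carrier_mat c2 (dim_col Z)"
   "\<And>x. x \<in> carrier_vec (dim_col Z) \<Longrightarrow> A *\<^sub>v (top_rows Z c *\<^sub>v x) + B *\<^sub>v (bot_rows Z c c2 *\<^sub>v x) = 0\<^sub>v r"
   "injm (top_rows Z c)" "injm (bot_rows Z c c2)"
proof -
  define z where "z = dim_col Z"
  have Z: "Z \<in> carrier_mat (c + c2) z" using Zb unfolding is_basis_of_def z_def by auto
  have iZ: "injm Z" using Zb fcr_injm unfolding is_basis_of_def by auto
  have rZ: "rng Z = mat_kernel (hcat A B)" using Zb unfolding is_basis_of_def by auto
  show t: "top_rows Z c \<in> carrier_mat c (dim_col Z)" unfolding top_rows_def by simp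
  show b: "bot_rows Z c c2 \<in> carrier_mat c2 (dim_col Z)" unfolding bot_rows_def by simp
  have H: "hcat A B \<in> carrier_mat r (c + c2)" using hcat_carrier[OF A B] .
  show key: "A *\<^sub>v (top_rows Z c *\<^sub>v x) + B *\<^sub>v (bot_rows Z c c2 *\<^sub>v x) = 0\<^sub>v r"
    if x: "x \<in> carrier_vec (dim_col Z)" for x
  proof -
    have x': "x \<in> carrier_vec z" using x z_def by simp
    have Zx: "Z *\<^sub>v x \<in> carrier_vec (c + c2)" using Z x' by simp
    have "Z *\<^sub>v x \<in> rng Z" using x unfolding rng_iff by auto
    then have "Z *\<^sub>v x \<in> mat_kernel (hcat A B)" using rZ by simp
    then have "hcat A B *\<^sub>v (Z *\<^sub>v x) = 0\<^sub>v r" using mat_kernelD(2)[OF H] by blast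
    moreover have "hcat A B *\<^sub>v (Z *\<^sub>v x) = A *\<^sub>v (top_rows Z c *\<^sub>v x) + B *\<^sub>v (bot_rows Z c c2 *\<^sub>v x)"
      using hcat_mult[OF A B Zx] top_rows_mult[OF Z x'] bot_rows_mult[OF Z x'] by simp
    ultimately show ?thesis by simp
  qed
  have zero: "Z *\<^sub>v x = 0\<^sub>v (c + c2)"
    if x: "x \<in> carrier_vec (dim_col Z)" and t0: "top_rows Z c *\<^sub>v x = 0\<^sub>v c"
      and b0: "bot_rows Z c c2 *\<^sub>v x = 0\<^sub>v c2" for x
  proof (rule eq_vecI)
    have x': "x \<in> carrier_vec z" using x z_def by simp
    fix i assume "i < dim_vec (0\<^sub>v (c + c2) :: real vec)"
    then have i: "i < c + c2" by simp
    show "(Z *\<^sub>v x) $ i = 0\<^sub>v (c + c2) $ i"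
    proof (cases "i < c")
      case True
      have "(top_rows Z c *\<^sub>v x) $ i = (Z *\<^sub>v x) $ i" using top_rows_mult[OF Z x'] True by simp
      then show ?thesis using t0 True i by simp
    next
      case False
      have ci: "c + (i - c) = i" using False by simp
      have "(bot_rows Z c c2 *\<^sub>v x) $ (i - c) = (\<lambda>j. (Z *\<^sub>v x) $ (c + j)) (i - c)"
        by (subst bot_rows_mult[OF Z x'], rule index_vec) (use False i in simp)
      then have "(bot_rows Z c c2 *\<^sub>v x) $ (i - c) = (Z *\<^sub>v x) $ i" using ci by simp
      then show ?thesis using b0 False i by simp
    qed
  qed (use Z in simp)
  have BS: "B *\<^sub>v (bot_rows Z c c2 *\<^sub>v x) \<in> carrier_vec r" if "x \<in> carrier_vec (dim_col Z)" for x
    using B b that by simp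
  have AT: "A *\<^sub>v (top_rows Z c *\<^sub>v x) \<in> carrier_vec r" if "x \<in> carrier_vec (dim_col Z)" for x
    using A t that by simp
  show "injm (top_rows Z c)" unfolding injm_def
  proof (intro ballI impI)
    fix x assume x: "x \<in> carrier_vec (dim_col (top_rows Z c))"
      and t0: "top_rows Z c *\<^sub>v x = 0\<^sub>v (dim_row (top_rows Z c))"
    have x': "x \<in> carrier_vec (dim_col Z)" using x t by simp
    have t0': "top_rows Z c *\<^sub>v x = 0\<^sub>v c" using t0 t by simp
    have "A *\<^sub>v (top_rows Z c *\<^sub>v x) = 0\<^sub>v r" using t0' mult_zero_vec[OF A] by simp
    then have "B *\<^sub>v (bot_rows Z c c2 *\<^sub>v x) = 0\<^sub>v r" using key[OF x'] BS[OF x'] by simp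
    then have "bot_rows Z c c2 *\<^sub>v x = 0\<^sub>v c2" using injmD[OF iB B] b x' by simp
    then have "Z *\<^sub>v x = 0\<^sub>v (c + c2)" using zero[OF x' t0'] by simp
    then have "x = 0\<^sub>v z" using injmD[OF iZ Z] x' z_def by simp
    then show "x = 0\<^sub>v (dim_col (top_rows Z c))" using t z_def by simp
  qed
  show "injm (bot_rows Z c c2)" unfolding injm_def
  proof (intro ballI impI)
    fix x assume x: "x \<in> carrier_vec (dim_col (bot_rows Z c c2))"
      and b0: "bot_rows Z c c2 *\<^sub>v x = 0\<^sub>v (dim_row (bot_rows Z c c2))"
    have x': "x \<in> carrier_vec (dim_col Z)" using x b by simp
    have b0': "bot_rows Z c c2 *\<^sub>v x = 0\<^sub>v c2" using b0 b by simp
    have "B *\<^sub>v (bot_rows Z c c2 *\<^sub>v x) = 0\<^sub>v r" using b0' mult_zero_vec[OF B] by simp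
    then have "A *\<^sub>v (top_rows Z c *\<^sub>v x) = 0\<^sub>v r" using key[OF x'] AT[OF x'] by simp
    then have "top_rows Z c *\<^sub>v x = 0\<^sub>v c" using injmD[OF iA A] t x' by simp
    then have "Z *\<^sub>v x = 0\<^sub>v (c + c2)" using zero[OF x' _ b0'] by simp
    then have "x = 0\<^sub>v z" using injmD[OF iZ Z] x' z_def by simp
    then show "x = 0\<^sub>v (dim_col (bot_rows Z c c2))" using b z_def by simp
  qed
qed

lemma ssd_main:
  fixes A0 B0 :: "real mat"
  assumes "ssd_rel A B C out" and A0: "A0 \<in> carrier_mat r m" and B0: "B0 \<in> carrier_mat r m"
    and iA0: "injm A0" and iB0: "injm B0"
  shows "\<forall>c. C \<in> carrier_mat m c \<longrightarrow> injm C \<longrightarrow> A = A0 * C \<longrightarrow> B = B0 * C \<longrightarrow>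
          (\<exists>c'. out \<in> carrier_mat m c') \<and> injm out \<and> rng (A0 * out) = rng (B0 * out)"
  using assms(1)
proof induction
  case (trivial_null A B C)
  show ?case
  proof (intro allI impI)
    fix c assume C: "C \<in> carrier_mat m c"
    have o: "0\<^sub>m (dim_row C) 0 \<in> carrier_mat m 0" using C by simp
    have "rng (A0 * 0\<^sub>m (dim_row C) 0) = {0\<^sub>v r}" by (rule rng_0cols, rule mult_carrier_mat[OF A0 o])
    moreover have "rng (B0 * 0\<^sub>m (dim_row C) 0) = {0\<^sub>v r}" by (rule rng_0cols, rule mult_carrier_mat[OF B0 o])
    ultimately show "(\<exists>c'. 0\<^sub>m (dim_row C) 0 \<in> carrier_mat m c') \<and> injm (0\<^sub>m (dim_row C) 0) \<and>
       rng (A0 * 0\<^sub>m (dim_row C) 0) = rng (B0 * 0\<^sub>m (dim_row C) 0)"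
      using o injm_0cols[of "0\<^sub>m (dim_row C) 0"] by auto
  qed
next
  case (stop Z A B C)
  show ?case
  proof (intro allI impI)
    fix c assume C: "C \<in> carrier_mat m c" and iC: "injm C" and eA: "A = A0 * C" and eB: "B = B0 * C"
    have A: "A \<in> carrier_mat r c" using eA A0 C by simp
    have B: "B \<in> carrier_mat r c" using eB B0 C by simp
    have iA: "injm A" using injm_mult[OF A0 C iA0 iC] eA by simp
    have iB: "injm B" using injm_mult[OF B0 C iB0 iC] eB by simp
    have dA: "dim_col A = c" "dim_col B = c" using A B by auto
    have Zb: "is_basis_of Z (c + c) (mat_kernel (hcat A B))" using stop.hyps(1) unfolding dA .
    note KF = kernel_facts[OF A B iA iB Zb]
    have "c \<le> dim_col Z" using stop.hyps(3) unfolding dA .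
    moreover have "dim_col Z \<le> c" using inj_le[OF KF(1) KF(4)] .
    ultimately have zc: "dim_col Z = c" by simp
    have T: "top_rows Z c \<in> carrier_mat c c" using KF(1) zc by simp
    have S: "bot_rows Z c c \<in> carrier_mat c c" using KF(2) zc by simp
    have sub1: "rng A \<subseteq> rng B"
    proof
      fix y assume "y \<in> rng A"
      then obtain v where v: "v \<in> carrier_vec c" "y = A *\<^sub>v v" unfolding rng_iff dA by blast
      obtain x where x: "x \<in> carrier_vec c" "top_rows Z c *\<^sub>v x = v" using square_surj[OF T KF(4) v(1)] by blast
      have x': "x \<in> carrier_vec (dim_col Z)" using x zc by simp
      have e: "A *\<^sub>v (top_rows Z c *\<^sub>v x) + B *\<^sub>v (bot_rows Z c c *\<^sub>v x) = 0\<^sub>v r" using KF(3)[OF x'] .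
      have "A *\<^sub>v (top_rows Z c *\<^sub>v x) = - (B *\<^sub>v (bot_rows Z c c *\<^sub>v x))"
      proof (rule vec_neg_eq(1)[OF _ _ e])
        have Tx: "top_rows Z c *\<^sub>v x \<in> carrier_vec c" using T x(1) by simp
        show "A *\<^sub>v (top_rows Z c *\<^sub>v x) \<in> carrier_vec r" using A Tx by simp
        have Sx: "bot_rows Z c c *\<^sub>v x \<in> carrier_vec c" using S x(1) by simp
        show "B *\<^sub>v (bot_rows Z c c *\<^sub>v x) \<in> carrier_vec r" using B Sx by simp
      qed
      also have "\<dots> = B *\<^sub>v (- (bot_rows Z c c *\<^sub>v x))" by (rule mult_neg[OF B]) (use S x in simp)
      finally have "y = B *\<^sub>v (- (bot_rows Z c c *\<^sub>v x))" using v x by simp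
      moreover have "- (bot_rows Z c c *\<^sub>v x) \<in> carrier_vec (dim_col B)" using S x dA by simp
      ultimately show "y \<in> rng B" unfolding rng_iff by blast
    qed
    have sub2: "rng B \<subseteq> rng A"
    proof
      fix y assume "y \<in> rng B"
      then obtain v where v: "v \<in> carrier_vec c" "y = B *\<^sub>v v" unfolding rng_iff dA by blast
      obtain x where x: "x \<in> carrier_vec c" "bot_rows Z c c *\<^sub>v x = v" using square_surj[OF S KF(5) v(1)] by blast
      have x': "x \<in> carrier_vec (dim_col Z)" using x zc by simp
      have e: "A *\<^sub>v (top_rows Z c *\<^sub>v x) + B *\<^sub>v (bot_rows Z c c *\<^sub>v x) = 0\<^sub>v r" using KF(3)[OF x'] .
      have "B *\<^sub>v (bot_rows Z c c *\<^sub>v x) = - (A *\<^sub>v (top_rows Z c *\<^sub>v x))"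
      proof (rule vec_neg_eq(2)[OF _ _ e])
        have Tx: "top_rows Z c *\<^sub>v x \<in> carrier_vec c" using T x(1) by simp
        show "A *\<^sub>v (top_rows Z c *\<^sub>v x) \<in> carrier_vec r" using A Tx by simp
        have Sx: "bot_rows Z c c *\<^sub>v x \<in> carrier_vec c" using S x(1) by simp
        show "B *\<^sub>v (bot_rows Z c c *\<^sub>v x) \<in> carrier_vec r" using B Sx by simp
      qed
      also have "\<dots> = A *\<^sub>v (- (top_rows Z c *\<^sub>v x))" by (rule mult_neg[OF A]) (use T x in simp)
      finally have "y = A *\<^sub>v (- (top_rows Z c *\<^sub>v x))" using v x by simp
      moreover have "- (top_rows Z c *\<^sub>v x) \<in> carrier_vec (dim_col A)" using T x dA by simp
      ultimately show "y \<in> rng A" unfolding rng_iff by blast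
    qed
    have "rng A = rng B" using sub1 sub2 by (rule subset_antisym)
    then have "rng (A0 * C) = rng (B0 * C)" using eA eB by simp
    then show "(\<exists>c'. C \<in> carrier_mat m c') \<and> injm C \<and> rng (A0 * C) = rng (B0 * C)"
      using C iC by blast
  qed
next
  case (step Z A B C out)
  show ?case
  proof (intro allI impI)
    fix c assume C: "C \<in> carrier_mat m c" and iC: "injm C" and eA: "A = A0 * C" and eB: "B = B0 * C"
    have A: "A \<in> carrier_mat r c" using eA A0 C by simp
    have B: "B \<in> carrier_mat r c" using eB B0 C by simp
    have iA: "injm A" using injm_mult[OF A0 C iA0 iC] eA by simp
    have iB: "injm B" using injm_mult[OF B0 C iB0 iC] eB by simp
    have dA: "dim_col A = c" "dim_col B = c" using A B by auto
    have Zb: "is_basis_of Z (c + c) (mat_kernel (hcat A B))" using step.hyps(1) unfolding dA .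
    note KF = kernel_facts[OF A B iA iB Zb]
    let ?T = "top_rows Z c"
    have CT: "C * ?T \<in> carrier_mat m (dim_col Z)" using C KF(1) by simp
    have iCT: "injm (C * ?T)" by (rule injm_mult[OF C KF(1) iC KF(4)])
    have e1: "A * ?T = A0 * (C * ?T)" using eA assoc_mult_mat[OF A0 C KF(1)] by simp
    have e2: "B * ?T = B0 * (C * ?T)" using eB assoc_mult_mat[OF B0 C KF(1)] by simp
    have IH: "\<forall>c. C * ?T \<in> carrier_mat m c \<longrightarrow> injm (C * ?T) \<longrightarrow> A * ?T = A0 * (C * ?T) \<longrightarrow>
        B * ?T = B0 * (C * ?T) \<longrightarrow> (\<exists>c'. out \<in> carrier_mat m c') \<and> injm out \<and> rng (A0 * out) = rng (B0 * out)"
      using step.IH unfolding dA .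
    show "(\<exists>c'. out \<in> carrier_mat m c') \<and> injm out \<and> rng (A0 * out) = rng (B0 * out)"
      using IH[rule_format, OF CT iCT e1 e2] .
  qed
qed

lemma pssd_step:
  fixes X Y :: "nat \<Rightarrow> real mat"
  assumes ex: "pssd_exec Mag E Nd X Y C Dm Em" and k: "1 \<le> k" and a: "a < Mag"
    and Xa: "X a \<in> carrier_mat ra Nd" and Ya: "Y a \<in> carrier_mat ra Nd"
    and iX: "injm (X a)" and iY: "injm (Y a)"
    and P: "C (k - 1) a \<in> carrier_mat Nd p" and iP: "injm (C (k - 1) a)"
  shows "(\<exists>p'. C k a \<in> carrier_mat Nd p') \<and> injm (C k a) \<and> rng (X a * C k a) = rng (Y a * C k a) \<and>
         (\<forall>b \<in> insert a (in_nbrs E a). rng (C k a) \<subseteq> rng (C (k - 1) b))"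
proof -
  let ?S = "\<Inter>b\<in>insert a (in_nbrs E a). rng (C (k - 1) b)"
  from ex have all: "\<forall>k \<ge> 1. \<forall>i < Mag.
        is_basis_of (Dm k i) Nd (\<Inter>j \<in> insert i (in_nbrs E i). rng (C (k - 1) j)) \<and>
        ssd (X i * Dm k i) (Y i * Dm k i) (Em k i) \<and>
        C k i = (if dim_col (Dm k i * Em k i) < dim_col (C (k - 1) i)
                 then Dm k i * Em k i else C (k - 1) i)" unfolding pssd_exec_def by blast
  have hb: "is_basis_of (Dm k a) Nd ?S" and hs: "ssd (X a * Dm k a) (Y a * Dm k a) (Em k a)"
    and hc: "C k a = (if dim_col (Dm k a * Em k a) < dim_col (C (k - 1) a)
                 then Dm k a * Em k a else C (k - 1) a)"
    using all k a by blast+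
  define D where "D = Dm k a"
  define Ek where "Ek = Em k a"
  define q where "q = dim_col D"
  have D: "D \<in> carrier_mat Nd q" using hb unfolding is_basis_of_def D_def q_def by auto
  have iD: "injm D" using hb fcr_injm unfolding is_basis_of_def D_def by auto
  have rD: "rng D = ?S" using hb unfolding is_basis_of_def D_def by auto
  have XD: "X a * D \<in> carrier_mat ra q" using Xa D by simp
  have YD: "Y a * D \<in> carrier_mat ra q" using Ya D by simp
  have iXD: "injm (X a * D)" by (rule injm_mult[OF Xa D iX iD])
  have iYD: "injm (Y a * D)" by (rule injm_mult[OF Ya D iY iD])
  have sr: "ssd_rel (X a * D) (Y a * D) (1\<^sub>m q) Ek"
    using hs XD unfolding ssd_def D_def[symmetric] Ek_def[symmetric] by (simp add: q_def)
  have one: "1\<^sub>m q \<in> carrier_mat q q" by simp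
  have e1: "X a * D = (X a * D) * 1\<^sub>m q" using right_mult_one_mat[OF XD] by simp
  have e2: "Y a * D = (Y a * D) * 1\<^sub>m q" using right_mult_one_mat[OF YD] by simp
  have res: "(\<exists>c'. Ek \<in> carrier_mat q c') \<and> injm Ek \<and> rng ((X a * D) * Ek) = rng ((Y a * D) * Ek)"
    using ssd_main[OF sr XD YD iXD iYD, rule_format, OF one injm_one e1 e2] .
  then obtain c' where Ek: "Ek \<in> carrier_mat q c'" by blast
  have iEk: "injm Ek" using res by blast
  define V where "V = D * Ek"
  have V: "V \<in> carrier_mat Nd c'" using D Ek unfolding V_def by simp
  have iV: "injm V" unfolding V_def by (rule injm_mult[OF D Ek iD iEk])
  have rXV: "rng (X a * V) = rng (Y a * V)"
    using res assoc_mult_mat[OF Xa D Ek] assoc_mult_mat[OF Ya D Ek] unfolding V_def by simp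
  have rV: "rng V \<subseteq> ?S" using rng_mult_sub[OF D Ek] rD unfolding V_def by simp
  have Ssub: "\<forall>b\<in>insert a (in_nbrs E a). ?S \<subseteq> rng (C (k - 1) b)" by blast
  have dV: "dim_col (Dm k a * Em k a) = c'" using V unfolding V_def D_def Ek_def by (rule carrier_matD(2))
  have dP: "dim_col (C (k - 1) a) = p" using P by simp
  have hc': "C k a = (if c' < p then V else C (k - 1) a)"
    using hc unfolding dV dP V_def D_def Ek_def .
  show ?thesis
  proof (cases "c' < p")
    case True
    then have Ck: "C k a = V" using hc' by simp
    have "\<forall>b \<in> insert a (in_nbrs E a). rng V \<subseteq> rng (C (k - 1) b)" using rV Ssub by blast
    then show ?thesis unfolding Ck using V iV rXV by blast
  next
    case False
    then have Ck: "C k a = C (k - 1) a" using hc' by simp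
    have s1: "rng V \<subseteq> rng (C (k - 1) a)" using rV Ssub by blast
    have pc: "p \<le> c'" using False by simp
    have s2: "rng (C (k - 1) a) \<subseteq> rng V" by (rule sub_rng_eq[OF V P iV pc s1])
    have eq: "rng (C (k - 1) a) = rng V" by (rule subset_antisym[OF s2 s1])
    have eqX: "rng (X a * C (k - 1) a) = rng (X a * V)"
      by (rule subset_antisym[OF rng_cong_mult[OF Xa P V s2] rng_cong_mult[OF Xa V P s1]])
    have eqY: "rng (Y a * C (k - 1) a) = rng (Y a * V)"
      by (rule subset_antisym[OF rng_cong_mult[OF Ya P V s2] rng_cong_mult[OF Ya V P s1]])
    have r: "rng (X a * C (k - 1) a) = rng (Y a * C (k - 1) a)" unfolding eqX eqY by (rule rXV)
    have "\<forall>b \<in> insert a (in_nbrs E a). rng (C (k - 1) a) \<subseteq> rng (C (k - 1) b)"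
      unfolding eq using rV Ssub by blast
    moreover have "\<exists>p'. C (k - 1) a \<in> carrier_mat Nd p'" using P by blast
    ultimately show ?thesis using iP r unfolding Ck by blast
  qed
qed

lemma C_inv:
  fixes X Y :: "nat \<Rightarrow> real mat"
  assumes ex: "pssd_exec Mag E Nd X Y C Dm Em"
    and XY: "\<forall>a<Mag. X a \<in> carrier_mat (rr a) Nd \<and> Y a \<in> carrier_mat (rr a) Nd \<and> injm (X a) \<and> injm (Y a)"
  shows "\<forall>a<Mag. (\<exists>p. C k a \<in> carrier_mat Nd p) \<and> injm (C k a)"
proof (induction k)
  case 0
  show ?case
  proof (intro allI impI)
    fix a assume a: "a < Mag"
    have "C 0 a = 1\<^sub>m Nd" using ex a unfolding pssd_exec_def by blast
    then show "(\<exists>p. C 0 a \<in> carrier_mat Nd p) \<and> injm (C 0 a)" using injm_one one_carrier_mat by metis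
  qed
next
  case (Suc k)
  show ?case
  proof (intro allI impI)
    fix a assume a: "a < Mag"
    have Xa: "X a \<in> carrier_mat (rr a) Nd" and Ya: "Y a \<in> carrier_mat (rr a) Nd"
      and iX: "injm (X a)" and iY: "injm (Y a)" using XY a by auto
    obtain p where P: "C (Suc k - 1) a \<in> carrier_mat Nd p" and iP: "injm (C (Suc k - 1) a)"
      using Suc a by auto
    have k1: "1 \<le> Suc k" by simp
    note st = pssd_step[OF ex k1 a Xa Ya iX iY P iP]
    show "(\<exists>p. C (Suc k) a \<in> carrier_mat Nd p) \<and> injm (C (Suc k) a)"
      using st by blast
  qed
qed

lemma C_props:
  fixes X Y :: "nat \<Rightarrow> real mat"
  assumes ex: "pssd_exec Mag E Nd X Y C Dm Em"
    and XY: "\<forall>a<Mag. X a \<in> carrier_mat (rr a) Nd \<and> Y a \<in> carrier_mat (rr a) Nd \<and> injm (X a) \<and> injm (Y a)"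
    and k: "1 \<le> k" and a: "a < Mag"
  shows "rng (X a * C k a) = rng (Y a * C k a) \<and> (\<forall>b \<in> insert a (in_nbrs E a). rng (C k a) \<subseteq> rng (C (k - 1) b))"
proof -
  have Xa: "X a \<in> carrier_mat (rr a) Nd" and Ya: "Y a \<in> carrier_mat (rr a) Nd"
    and iX: "injm (X a)" and iY: "injm (Y a)" using XY a by auto
  have "(\<exists>p. C (k - 1) a \<in> carrier_mat Nd p) \<and> injm (C (k - 1) a)"
    using C_inv[OF ex XY, of "k - 1"] a by blast
  then obtain p where P: "C (k - 1) a \<in> carrier_mat Nd p" and iP: "injm (C (k - 1) a)" by blast
  note st = pssd_step[OF ex k a Xa Ya iX iY P iP]
  show ?thesis using st by blast
qed

lemma C_mono:
  fixes X Y :: "nat \<Rightarrow> real mat"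
  assumes ex: "pssd_exec Mag E Nd X Y C Dm Em"
    and XY: "\<forall>a<Mag. X a \<in> carrier_mat (rr a) Nd \<and> Y a \<in> carrier_mat (rr a) Nd \<and> injm (X a) \<and> injm (Y a)"
    and a: "a < Mag"
  shows "rng (C (k + d) a) \<subseteq> rng (C k a)"
proof (induction d)
  case 0 then show ?case by simp
next
  case (Suc d)
  have k1: "1 \<le> k + Suc d" by simp
  have "\<forall>b\<in>insert a (in_nbrs E a). rng (C (k + Suc d) a) \<subseteq> rng (C (k + Suc d - 1) b)"
    using C_props[OF ex XY k1 a] by blast
  then have "rng (C (k + Suc d) a) \<subseteq> rng (C (k + Suc d - 1) a)" by blast
  moreover have "k + Suc d - 1 = k + d" by simp
  ultimately show ?case using Suc.IH by simp
qed

lemma C_path: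
  fixes X Y :: "nat \<Rightarrow> real mat"
  assumes ex: "pssd_exec Mag E Nd X Y C Dm Em"
    and XY: "\<forall>a<Mag. X a \<in> carrier_mat (rr a) Nd \<and> Y a \<in> carrier_mat (rr a) Nd \<and> injm (X a) \<and> injm (Y a)"
    and path: "dir_path {..<Mag} E ps l j i"
  shows "t \<le> l \<Longrightarrow> \<forall>q. k + t \<le> q \<longrightarrow> rng (C q (ps ! t)) \<subseteq> rng (C k j)"
proof (induction t)
  have len: "length ps = l + 1" and sps: "set ps \<subseteq> {..<Mag}" and hd: "hd ps = j"
    and edges: "\<forall>t < l. (ps ! t, ps ! (t + 1)) \<in> E"
    using path unfolding dir_path_def by auto
  have node: "ps ! t < Mag" if "t \<le> l" for t
  proof -
    have "t < length ps" using that len by simp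
    then have "ps ! t \<in> set ps" by (rule nth_mem)
    then show ?thesis using sps by auto
  qed
  case 0
  have ne: "ps \<noteq> []" using len by auto
  have j: "ps ! 0 = j" using hd_conv_nth[OF ne] hd by simp
  show ?case
  proof (intro allI impI)
    fix q assume q: "k + 0 \<le> q"
    then have "k \<le> q" by simp
    then obtain d where qd: "q = k + d" using le_Suc_ex by blast
    have "rng (C (k + d) j) \<subseteq> rng (C k j)" using C_mono[OF ex XY node[of 0]] j by simp
    then show "rng (C q (ps ! 0)) \<subseteq> rng (C k j)" using qd j by simp
  qed
next
  case (Suc t)
  have len: "length ps = l + 1" and sps: "set ps \<subseteq> {..<Mag}"
    and edges: "\<forall>t < l. (ps ! t, ps ! (t + 1)) \<in> E"
    using path unfolding dir_path_def by auto
  have tl: "t < l" using Suc.prems by simp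
  have node: "ps ! Suc t < Mag"
  proof -
    have "Suc t < length ps" using Suc.prems len by simp
    then have "ps ! Suc t \<in> set ps" by (rule nth_mem)
    then show ?thesis using sps by auto
  qed
  have IH: "\<forall>q. k + t \<le> q \<longrightarrow> rng (C q (ps ! t)) \<subseteq> rng (C k j)" using Suc.IH tl by simp
  show ?case
  proof (intro allI impI)
    fix q assume q: "k + Suc t \<le> q"
    have e: "(ps ! t, ps ! Suc t) \<in> E" using edges tl by simp
    then have b: "ps ! t \<in> insert (ps ! Suc t) (in_nbrs E (ps ! Suc t))" unfolding in_nbrs_def by simp
    have q1: "1 \<le> q" using q by simp
    have "\<forall>b\<in>insert (ps ! Suc t) (in_nbrs E (ps ! Suc t)). rng (C q (ps ! Suc t)) \<subseteq> rng (C (q - 1) b)"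
      using C_props[OF ex XY q1 node] by blast
    then have s1: "rng (C q (ps ! Suc t)) \<subseteq> rng (C (q - 1) (ps ! t))" using b by blast
    have "k + t \<le> q - 1" using q by simp
    then have s2: "rng (C (q - 1) (ps ! t)) \<subseteq> rng (C k j)" using IH by blast
    show "rng (C q (ps ! Suc t)) \<subseteq> rng (C k j)" using s1 s2 by blast
  qed
qed

lemma transfer:
  fixes Xi Yi Xj Yj Xs Ys V C' :: "real mat"
  assumes Xi: "Xi \<in> carrier_mat ri n" and Yi: "Yi \<in> carrier_mat ri n"
    and Xj: "Xj \<in> carrier_mat rj n" and Yj: "Yj \<in> carrier_mat rj n"
    and Xs: "Xs \<in> carrier_mat rs n" and Ys: "Ys \<in> carrier_mat rs n"
    and V: "V \<in> carrier_mat n v" and C': "C' \<in> carrier_mat n c"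
    and sub: "rng V \<subseteq> rng C'" and ri: "rng (Yi * V) \<subseteq> rng (Xi * V)"
    and rj: "rng (Yj * C') \<subseteq> rng (Xj * C')" and iXs: "injm Xs"
    and hi: "\<forall>u\<in>carrier_vec n. \<forall>w\<in>carrier_vec n. Xi *\<^sub>v u = Yi *\<^sub>v w \<longrightarrow> Xs *\<^sub>v u = Ys *\<^sub>v w"
    and hj: "\<forall>u\<in>carrier_vec n. \<forall>w\<in>carrier_vec n. Xj *\<^sub>v u = Yj *\<^sub>v w \<longrightarrow> Xs *\<^sub>v u = Ys *\<^sub>v w"
  shows "rng (Yj * V) \<subseteq> rng (Xj * V)"
proof
  fix y assume "y \<in> rng (Yj * V)"
  then obtain x where x: "x \<in> carrier_vec v" "y = (Yj * V) *\<^sub>v x" using Yj V unfolding rng_iff by auto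
  have Vx: "V *\<^sub>v x \<in> carrier_vec n" using V x by simp
  have "V *\<^sub>v x \<in> rng V" using V x unfolding rng_iff by auto
  then have "V *\<^sub>v x \<in> rng C'" using sub by blast
  then obtain w where w: "w \<in> carrier_vec c" "V *\<^sub>v x = C' *\<^sub>v w" using C' unfolding rng_iff by auto
  have "(Yi * V) *\<^sub>v x \<in> rng (Yi * V)" using Yi V x unfolding rng_iff by auto
  then have "(Yi * V) *\<^sub>v x \<in> rng (Xi * V)" using ri by blast
  then obtain y' where y': "y' \<in> carrier_vec v" "(Yi * V) *\<^sub>v x = (Xi * V) *\<^sub>v y'"
    using Xi V unfolding rng_iff by auto
  have Vy: "V *\<^sub>v y' \<in> carrier_vec n" using V y' by simp
  have "Xi *\<^sub>v (V *\<^sub>v y') = Yi *\<^sub>v (V *\<^sub>v x)" using y' x Xi Yi V by simp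
  then have s1: "Xs *\<^sub>v (V *\<^sub>v y') = Ys *\<^sub>v (V *\<^sub>v x)" using hi Vx Vy by blast
  have "(Yj * C') *\<^sub>v w \<in> rng (Yj * C')" using Yj C' w unfolding rng_iff by auto
  then have "(Yj * C') *\<^sub>v w \<in> rng (Xj * C')" using rj by blast
  then obtain u where u: "u \<in> carrier_vec c" "(Yj * C') *\<^sub>v w = (Xj * C') *\<^sub>v u"
    using Xj C' unfolding rng_iff by auto
  have Cu: "C' *\<^sub>v u \<in> carrier_vec n" using C' u by simp
  have Cw: "C' *\<^sub>v w \<in> carrier_vec n" using C' w by simp
  have e2: "Xj *\<^sub>v (C' *\<^sub>v u) = Yj *\<^sub>v (C' *\<^sub>v w)" using u w Xj Yj C' by simp
  then have s2: "Xs *\<^sub>v (C' *\<^sub>v u) = Ys *\<^sub>v (C' *\<^sub>v w)" using hj Cu Cw by blast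
  have "Xs *\<^sub>v (C' *\<^sub>v u) = Xs *\<^sub>v (V *\<^sub>v y')" using s1 s2 w by simp
  then have cu: "C' *\<^sub>v u = V *\<^sub>v y'" using injm_eq[OF iXs] Cu Vy Xs by simp
  have "y = Yj *\<^sub>v (C' *\<^sub>v w)" using x w Yj V by simp
  also have "\<dots> = Xj *\<^sub>v (V *\<^sub>v y')" using e2 cu by simp
  also have "\<dots> = (Xj * V) *\<^sub>v y'" using Xj V y' by simp
  finally show "y \<in> rng (Xj * V)" using y' Xj V unfolding rng_iff by auto
qed

lemma local_mat_carrier: "local_mat d Nd zs idx \<in> carrier_mat (length idx) Nd"
  unfolding local_mat_def dict_mat_def by simp

theorem proposition5p1:
  fixes n Nd N Mag :: nat
    and Msp :: "real vec set" and T :: "real vec \<Rightarrow> real vec"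
    and d :: "nat \<Rightarrow> real vec \<Rightarrow> real"
    and xs ys :: "nat \<Rightarrow> real vec"
    and idx :: "nat \<Rightarrow> nat list" and idxs :: "nat list"
    and E :: "(nat \<times> nat) set"
    and C Dm Em :: "nat \<Rightarrow> nat \<Rightarrow> real mat"
    and ps :: "nat list" and l j i :: nat
  assumes "Msp \<subseteq> carrier_vec n"
    and "\<forall>x \<in> Msp. T x \<in> Msp"
    and "\<forall>p < N. xs p \<in> Msp \<and> ys p = T (xs p)"
    and "full_col_rank (dict_mat d Nd xs N)"
    and "full_col_rank (dict_mat d Nd ys N)"
    and "\<forall>a < Mag. set (idx a) \<subseteq> {..<N}"
    and "(\<Union>a < Mag. row_pairs (local_mat d Nd xs (idx a)) (local_mat d Nd ys (idx a)))
         = row_pairs (dict_mat d Nd xs N) (dict_mat d Nd ys N)"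
    and "set idxs \<subseteq> {..<N}"
    and "full_col_rank (local_mat d Nd xs idxs)"
    and "full_col_rank (local_mat d Nd ys idxs)"
    and "\<forall>a < Mag. row_pairs (local_mat d Nd xs idxs) (local_mat d Nd ys idxs)
                  \<subseteq> row_pairs (local_mat d Nd xs (idx a)) (local_mat d Nd ys (idx a))"
    and "E \<subseteq> {..<Mag} \<times> {..<Mag}"
    and "pssd_exec Mag E Nd (\<lambda>a. local_mat d Nd xs (idx a)) (\<lambda>a. local_mat d Nd ys (idx a)) C Dm Em"
    and "dir_path {..<Mag} E ps l j i"
  shows "\<forall>k q. 1 \<le> k \<longrightarrow> k + l \<le> q \<longrightarrow>
           rng (C q i) \<subseteq> rng (C k j) \<and>
           rng (local_mat d Nd xs (idx j) * C q i) = rng (local_mat d Nd ys (idx j) * C q i)"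
proof -
  define X where "X = (\<lambda>a. local_mat d Nd xs (idx a))"
  define Y where "Y = (\<lambda>a. local_mat d Nd ys (idx a))"
  define Xs where "Xs = local_mat d Nd xs idxs"
  define Ys where "Ys = local_mat d Nd ys idxs"
  define rr where "rr = (\<lambda>a. length (idx a))"
  have ex: "pssd_exec Mag E Nd X Y C Dm Em" using assms(13) unfolding X_def Y_def .
  have Xc: "X a \<in> carrier_mat (rr a) Nd" for a unfolding X_def rr_def by (rule local_mat_carrier)
  have Yc: "Y a \<in> carrier_mat (rr a) Nd" for a unfolding Y_def rr_def by (rule local_mat_carrier)
  have Xs: "Xs \<in> carrier_mat (length idxs) Nd" unfolding Xs_def by (rule local_mat_carrier)
  have Ys: "Ys \<in> carrier_mat (length idxs) Nd" unfolding Ys_def by (rule local_mat_carrier)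
  have iXs: "injm Xs" using assms(9) fcr_injm unfolding Xs_def by blast
  have iYs: "injm Ys" using assms(10) fcr_injm unfolding Ys_def by blast
  have rows: "\<forall>r<length idxs. \<exists>r'<rr a. row Xs r = row (X a) r' \<and> row Ys r = row (Y a) r'"
    if a: "a < Mag" for a
  proof -
    have "row_pairs Xs Ys \<subseteq> row_pairs (X a) (Y a)"
      using assms(11) a unfolding Xs_def Ys_def X_def Y_def by blast
    from row_pairs_sub[OF this] show ?thesis using Xs Xc[of a] by simp
  qed
  have hyp: "\<forall>u\<in>carrier_vec Nd. \<forall>w\<in>carrier_vec Nd. X a *\<^sub>v u = Y a *\<^sub>v w \<longrightarrow> Xs *\<^sub>v u = Ys *\<^sub>v w"
    if a: "a < Mag" for a
    using rows_sub_eq[OF Xs Ys Xc[of a] Yc[of a] rows[OF a]] by blast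
  have hyp': "\<forall>u\<in>carrier_vec Nd. \<forall>w\<in>carrier_vec Nd. Y a *\<^sub>v u = X a *\<^sub>v w \<longrightarrow> Ys *\<^sub>v u = Xs *\<^sub>v w"
    if a: "a < Mag" for a
    using hyp[OF a] by (metis (no_types))
  have iX: "injm (X a)" if a: "a < Mag" for a
    unfolding injm_def
  proof (intro ballI impI)
    fix x assume x: "x \<in> carrier_vec (dim_col (X a))" and z: "X a *\<^sub>v x = 0\<^sub>v (dim_row (X a))"
    have x': "x \<in> carrier_vec Nd" using x Xc[of a] by simp
    have r1: "\<forall>r<length idxs. \<exists>r'<rr a. row Xs r = row (X a) r'" using rows[OF a] by blast
    have "Xs *\<^sub>v x = 0\<^sub>v (length idxs)"
      by (rule rows_sub_zero[OF Xs Xc[of a] r1 x']) (use z Xc[of a] in simp)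
    then have "x = 0\<^sub>v Nd" using injmD[OF iXs Xs x'] by simp
    then show "x = 0\<^sub>v (dim_col (X a))" using Xc[of a] by simp
  qed
  have iY: "injm (Y a)" if a: "a < Mag" for a
    unfolding injm_def
  proof (intro ballI impI)
    fix x assume x: "x \<in> carrier_vec (dim_col (Y a))" and z: "Y a *\<^sub>v x = 0\<^sub>v (dim_row (Y a))"
    have x': "x \<in> carrier_vec Nd" using x Yc[of a] by simp
    have r1: "\<forall>r<length idxs. \<exists>r'<rr a. row Ys r = row (Y a) r'" using rows[OF a] by blast
    have "Ys *\<^sub>v x = 0\<^sub>v (length idxs)"
      by (rule rows_sub_zero[OF Ys Yc[of a] r1 x']) (use z Yc[of a] in simp)
    then have "x = 0\<^sub>v Nd" using injmD[OF iYs Ys x'] by simp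
    then show "x = 0\<^sub>v (dim_col (Y a))" using Yc[of a] by simp
  qed
  have XY: "\<forall>a<Mag. X a \<in> carrier_mat (rr a) Nd \<and> Y a \<in> carrier_mat (rr a) Nd \<and> injm (X a) \<and> injm (Y a)"
    using Xc Yc iX iY by blast
  have path: "dir_path {..<Mag} E ps l j i" using assms(14) .
  have len: "length ps = l + 1" and sps: "set ps \<subseteq> {..<Mag}" and hd: "hd ps = j" and lst: "last ps = i"
    using path unfolding dir_path_def by auto
  have ne: "ps \<noteq> []" using len by auto
  have psl: "ps ! l = i" using last_conv_nth[OF ne] lst len by simp
  have jM: "j < Mag" using hd_in_set[OF ne] hd sps by auto
  have iM: "i < Mag" using last_in_set[OF ne] lst sps by auto
  show ?thesis
  proof (intro allI impI)
    fix k q assume k: "1 \<le> k" and q: "k + l \<le> q"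
    have sub: "rng (C q i) \<subseteq> rng (C k j)"
      using C_path[OF ex XY path, of l k] q psl by simp
    have q1: "1 \<le> q" using k q by simp
    obtain pq where Pq: "C q i \<in> carrier_mat Nd pq" using C_inv[OF ex XY, of q] iM by blast
    obtain pk where Pk: "C k j \<in> carrier_mat Nd pk" using C_inv[OF ex XY, of k] jM by blast
    have ri: "rng (X i * C q i) = rng (Y i * C q i)" using C_props[OF ex XY q1 iM] by blast
    have rj: "rng (X j * C k j) = rng (Y j * C k j)" using C_props[OF ex XY k jM] by blast
    have t1: "rng (Y j * C q i) \<subseteq> rng (X j * C q i)"
      by (rule transfer[OF Xc[of i] Yc[of i] Xc[of j] Yc[of j] Xs Ys Pq Pk sub _ _ iXs hyp[OF iM] hyp[OF jM]])
        (use ri rj in blast)+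
    have t2: "rng (X j * C q i) \<subseteq> rng (Y j * C q i)"
      by (rule transfer[OF Yc[of i] Xc[of i] Yc[of j] Xc[of j] Ys Xs Pq Pk sub _ _ iYs hyp'[OF iM] hyp'[OF jM]])
        (use ri rj in blast)+
    have "rng (X j * C q i) = rng (Y j * C q i)" using t1 t2 by blast
    moreover have "rng (local_mat d Nd xs (idx j) * C q i) = rng (X j * C q i)" unfolding X_def by simp
    moreover have "rng (local_mat d Nd ys (idx j) * C q i) = rng (Y j * C q i)" unfolding Y_def by simp
    ultimately show "rng (C q i) \<subseteq> rng (C k j) \<and>
           rng (local_mat d Nd xs (idx j) * C q i) = rng (local_mat d Nd ys (idx j) * C q i)"
      using sub by simp
  qed
qed

end
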